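(* Let $g_1,g_2$ be monic divisors of $x^m-1$ over $\mathbb{F}_q$, $v_1\in\mathcal{R}$, and let $\mathcal{D}_1$ be the QC code of length $2m$ generated by $(g_1,v_1g_1)$ and $(0,g_2)$. Then $\mathcal{D}_1$ is Euclidean dual-containing iff $g_1\mid g_1^{\perp}$, $g_1\mid g_2^{\perp}\overline{v_1}$ and $g_2\mid g_2^{\perp}(1+\overline{v_1}v_1)$.
   Context: $\mathcal{R}=\mathbb{F}_q[x]/(x^m-1)$, elements identified with representatives of degree $<m$; $[k]=(k_0,\dots,k_{m-1})$; $\overline{k}(x)=k(x^{-1})\bmod(x^m-1)$; $f^*(x)=x^{\deg f}f(1/x)$; for $k\in\mathcal{R}$, $f=\frac{x^m-1}{\gcd(k,x^m-1)}$ and $k^{\perp}=f(0)^{-1}f^*$. For $g\mid x^m-1$, "$g\mid a$" means $g$ divides the representative of $a\in\mathcal{R}$. The QC code generated by $(u_{i1},u_{i2})$, $i=1,2$, is $\{([r_1u_{11}+r_2u_{21}],[r_1u_{12}+r_2u_{22}]):r_i\in\mathcal{R}\}$. Euclidean dual-containing: $\mathcal{D}_1^{\perp_E}\subseteq\mathcal{D}_1$ with $\langle u,v\rangle_E=\sum u_iv_i$. *)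

theory Defs
  imports "HOL-Computational_Algebra.Computational_Algebra"
begin

definition xm1 :: "nat \<Rightarrow> 'a::field poly" where
  "xm1 m = monom 1 m - 1"

text \<open>Elements of R are identified with their representatives of degree < m.\<close>
definition Rset :: "nat \<Rightarrow> 'a::field poly set" where
  "Rset m = {p. degree p < m}"

definition rmult :: "nat \<Rightarrow> 'a::field poly \<Rightarrow> 'a poly \<Rightarrow> 'a poly" where
  "rmult m a b = (a * b) mod xm1 m"

definition cvec :: "nat \<Rightarrow> 'a::zero poly \<Rightarrow> 'a list" where
  "cvec m k = map (coeff k) [0..<m]"

text \<open>conj k (x) = k(x^{-1}) mod (x^m - 1); its i-th coefficient is k_{(m-i) mod m}.\<close>
definition rconj :: "nat \<Rightarrow> 'a::zero poly \<Rightarrow> 'a poly" where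
  "rconj m k = Poly (map (\<lambda>i. coeff k ((m - i) mod m)) [0..<m])"

definition rperp :: "nat \<Rightarrow> 'a::field_gcd poly \<Rightarrow> 'a poly" where
  "rperp m k = (let f = xm1 m div gcd k (xm1 m)
                in smult (inverse (poly f 0)) (reflect_poly f) mod xm1 m)"

definition einner :: "'a::comm_semiring_1 list \<Rightarrow> 'a list \<Rightarrow> 'a" where
  "einner u v = sum_list (map2 (*) u v)"

definition qc_code :: "nat \<Rightarrow> 'a::field poly \<Rightarrow> 'a poly \<Rightarrow> 'a poly \<Rightarrow> 'a poly \<Rightarrow> 'a list set" where
  "qc_code m u11 u12 u21 u22 =
     {cvec m (rmult m r1 u11 + rmult m r2 u21) @ cvec m (rmult m r1 u12 + rmult m r2 u22)
       | r1 r2. r1 \<in> Rset m \<and> r2 \<in> Rset m}"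

definition edual :: "nat \<Rightarrow> 'a::comm_semiring_1 list set \<Rightarrow> 'a list set" where
  "edual n C = {u. length u = n \<and> (\<forall>c\<in>C. einner u c = 0)}"

definition dual_containing :: "nat \<Rightarrow> 'a::comm_semiring_1 list set \<Rightarrow> bool" where
  "dual_containing n C \<longleftrightarrow> edual n C \<subseteq> C"

end

theory Submission
  imports Defs
begin


definition cj :: "nat \<Rightarrow> 'a::field poly \<Rightarrow> 'a poly" where
  "cj m p = p \<circ>\<^sub>p monom 1 (m - 1)"

definition bf :: "nat \<Rightarrow> 'a::field poly \<Rightarrow> 'a poly \<Rightarrow> 'a" where
  "bf m a b = coeff ((a * cj m b) mod xm1 m) 0"

lemma degree_xm1: "m \<ge> 1 \<Longrightarrow> degree (xm1 m :: 'a::field poly) = m"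
proof -
  assume m: "m \<ge> 1"
  have "xm1 m = monom 1 m + (- 1 :: 'a poly)" unfolding xm1_def by simp
  also have "degree \<dots> = m"
    using m by (subst degree_add_eq_left) (simp_all add: degree_monom_eq)
  finally show ?thesis .
qed

lemma xm1_nz: "m \<ge> 1 \<Longrightarrow> (xm1 m :: 'a::field poly) \<noteq> 0"
  using degree_xm1[of m] by (metis degree_0 not_one_le_zero)

lemma dvd_pow_minus_one: "(y - 1) dvd (y ^ q - (1::'a::comm_ring_1))"
proof (induction q)
  case 0 then show ?case by simp
next
  case (Suc q)
  have "y ^ Suc q - 1 = y * (y ^ q - 1) + (y - 1)" by (simp add: algebra_simps)
  then show ?case using Suc by (metis dvd_add dvd_mult dvd_refl)
qed

lemma xm1_dvd_monom: "xm1 m dvd (monom 1 (m * q) - (1::'a::field poly))"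
proof -
  have "monom (1::'a) (m * q) = (monom 1 m) ^ q"
    by (simp add: monom_power mult.commute)
  then show ?thesis unfolding xm1_def using dvd_pow_minus_one by metis
qed

lemma red_monom: assumes "m \<ge> 1"
  shows "monom c k mod xm1 m = (monom c (k mod m) :: 'a::field poly)"
proof -
  have e: "monom c k - monom c (k mod m) = monom c (k mod m) * (monom 1 (m * (k div m)) - (1::'a poly))"
    by (simp add: algebra_simps mult_monom)
  have "xm1 m dvd monom c k - monom c (k mod m)"
    unfolding e using xm1_dvd_monom by (metis dvd_mult)
  then have "monom c k mod xm1 m = monom c (k mod m) mod xm1 m"
    using mod_eq_dvd_iff by blast
  also have "\<dots> = monom c (k mod m)"
  proof (cases "c = 0")
    case True then show ?thesis by simp
  next
    case False
    then show ?thesis using assms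
      by (intro mod_poly_less) (simp add: degree_monom_eq degree_xm1)
  qed
  finally show ?thesis .
qed

lemma cj_monom: "cj m (monom c n) = monom c (n * (m - 1))"
proof (induction n)
  case 0 then show ?case by (simp add: cj_def monom_0 pcompose_const)
next
  case (Suc n)
  have "cj m (monom c (Suc n)) = monom 1 (m - 1) * cj m (monom c n)"
    unfolding cj_def monom_Suc pcompose_pCons by simp
  also have "\<dots> = monom c (m - 1 + n * (m - 1))" unfolding Suc mult_monom by simp
  finally show ?case by simp
qed

lemma cj_add: "cj m (a + b) = cj m a + cj m b" by (simp add: cj_def pcompose_add)
lemma cj_diff: "cj m (a - b) = cj m a - cj m b" by (simp add: cj_def pcompose_diff)
lemma cj_mult: "cj m (a * b) = cj m a * cj m b" by (simp add: cj_def pcompose_mult)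
lemma cj_sum: "cj m (sum f A) = (\<Sum>i\<in>A. cj m (f i))" by (simp add: cj_def pcompose_sum)
lemma cj_1: "cj m 1 = 1" by (simp add: cj_def pcompose_1)
lemma cj_0: "cj m 0 = 0" by (simp add: cj_def)

lemma cj_xm1: "xm1 m dvd cj m (xm1 m)"
proof -
  have "cj m (xm1 m) = monom 1 (m * (m - 1)) - (1::'a::field poly)"
    unfolding xm1_def cj_diff cj_monom cj_1 by simp
  then show ?thesis using xm1_dvd_monom by metis
qed

lemma cj_cong: assumes "xm1 m dvd a - b" shows "xm1 m dvd cj m a - (cj m b :: 'a::field poly)"
proof -
  obtain k where "a - b = xm1 m * k" using assms by blast
  then have "cj m a - cj m b = cj m (xm1 m) * cj m k" by (metis cj_diff cj_mult)
  then show ?thesis using cj_xm1 by (metis dvd_mult2)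
qed

lemma bf_cong: assumes "xm1 m dvd a - a'" "xm1 m dvd b - b'"
  shows "bf m a b = bf m a' (b' :: 'a::field poly)"
proof -
  have "a * cj m b - a' * cj m b' = (a - a') * cj m b + a' * (cj m b - cj m b')"
    by (simp add: algebra_simps)
  moreover have "xm1 m dvd (a - a') * cj m b + a' * (cj m b - cj m b')"
    using assms cj_cong[OF assms(2)] by (simp add: dvd_add dvd_mult dvd_mult2)
  ultimately have "(a * cj m b) mod xm1 m = (a' * cj m b') mod xm1 m"
    using mod_eq_dvd_iff by metis
  then show ?thesis unfolding bf_def by simp
qed



lemma arith1: assumes "i < m" "n < (m::nat)"
  shows "(i + n * (m - 1)) mod m = 0 \<longleftrightarrow> i = n"
proof (cases "n \<le> i")
  case True
  then have "i + n * (m - 1) = (i - n) + n * m"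
    using assms by (simp add: algebra_simps diff_mult_distrib2)
  then have "(i + n * (m - 1)) mod m = i - n" using assms by simp
  then show ?thesis using True by auto
next
  case False
  then have "i + n * (m - 1) = (m - (n - i)) + (n - 1) * m"
    using assms by (simp add: algebra_simps diff_mult_distrib2 diff_mult_distrib)
  then have "(i + n * (m - 1)) mod m = (m - (n - i)) mod m" by (simp only: mod_mult_self1)
  then have "(i + n * (m - 1)) mod m = m - (n - i)" using assms False by simp
  then show ?thesis using False assms by auto
qed

lemma bf_monom: assumes "m \<ge> 1" "i < m" "n < m"
  shows "bf m (monom c i) (monom d n) = (if i = n then c * d else (0::'a::field))"
proof -
  have "bf m (monom c i) (monom d n) = coeff (monom (c * d) ((i + n * (m - 1)) mod m)) 0"
    unfolding bf_def cj_monom mult_monom red_monom[OF assms(1)] ..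
  then show ?thesis using arith1[OF assms(2,3)] by (auto simp: coeff_monom)
qed

lemma poly_mod_sum: "sum f A mod (z::'a::field poly) = (\<Sum>i\<in>A. f i mod z)"
proof (cases "finite A")
  case True then show ?thesis
    by (induction rule: finite_induct) (simp_all add: poly_mod_add_left)
qed simp

lemma bf_sum_left: "bf m (sum f A) b = (\<Sum>i\<in>A. bf m (f i) (b::'a::field poly))"
  unfolding bf_def by (simp add: sum_distrib_right poly_mod_sum coeff_sum)

lemma bf_sum_right: "bf m a (sum f A) = (\<Sum>i\<in>A. bf m a (f i :: 'a::field poly))"
  unfolding bf_def by (simp add: cj_sum sum_distrib_left poly_mod_sum coeff_sum)

lemma bf_add_left: "bf m (a + a') b = bf m a b + bf m a' (b::'a::field poly)"
  unfolding bf_def by (simp add: distrib_right poly_mod_add_left)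

lemma bf_zero_left: "bf m 0 b = (0::'a::field)"
  unfolding bf_def by simp

lemma poly_sum_lt: assumes "m \<ge> 1" "degree a < m"
  shows "(\<Sum>i<m. monom (coeff a i) i) = (a::'a::comm_monoid_add poly)"
proof -
  have "{..<m} = {..m-1}" using assms(1) by auto
  then show ?thesis using poly_as_sum_of_monoms'[of a "m-1"] assms by simp
qed

lemma bf_monom1: assumes "m \<ge> 1" "degree a < m" "j < m"
  shows "bf m a (monom 1 j) = coeff (a::'a::field poly) j"
proof -
  have "bf m a (monom 1 j) = (\<Sum>i<m. bf m (monom (coeff a i) i) (monom 1 j))"
    using bf_sum_left[of m "\<lambda>i. monom (coeff a i) i" "{..<m}"] poly_sum_lt[OF assms(1,2)] by simp
  also have "\<dots> = (\<Sum>i<m. if i = j then coeff a i else 0)"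
    by (rule sum.cong) (use assms in \<open>simp_all add: bf_monom\<close>)
  also have "\<dots> = coeff a j" using assms by simp
  finally show ?thesis .
qed

lemma einner_cvec: "einner (cvec m a) (cvec m b) = (\<Sum>i<m. coeff a i * coeff b i)"
  unfolding einner_def cvec_def
  by (simp add: zip_map_map zip_same_conv_map interv_sum_list_conv_sum_set_nat atLeast0LessThan comp_def)

lemma inner_bf: assumes "m \<ge> 1" "degree a < m" "degree b < m"
  shows "einner (cvec m a) (cvec m b) = bf m a (b::'a::field poly)"
proof -
  have "bf m a b = (\<Sum>n<m. bf m a (monom (coeff b n) n))"
    using bf_sum_right[of m a "\<lambda>i. monom (coeff b i) i" "{..<m}"] poly_sum_lt[OF assms(1,3)] by simp
  also have "\<dots> = (\<Sum>n<m. \<Sum>i<m. bf m (monom (coeff a i) i) (monom (coeff b n) n))"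
    using bf_sum_left[of m "\<lambda>i. monom (coeff a i) i" "{..<m}"] poly_sum_lt[OF assms(1,2)] by simp
  also have "\<dots> = (\<Sum>n<m. \<Sum>i<m. if i = n then coeff a i * coeff b n else 0)"
    by (intro sum.cong refl) (use assms in \<open>simp add: bf_monom\<close>)
  also have "\<dots> = (\<Sum>n<m. coeff a n * coeff b n)" by simp
  finally show ?thesis using einner_cvec by metis
qed

lemma reduced_mod: "m \<ge> 1 \<Longrightarrow> degree (p mod xm1 m) < m \<or> p mod xm1 m = 0"
  using degree_mod_less[OF xm1_nz] degree_xm1 by metis

lemma bf_annih: assumes "m \<ge> 1"
  shows "(\<forall>r. degree r < m \<longrightarrow> bf m w r = 0) \<longleftrightarrow> xm1 m dvd (w::'a::field poly)"
proof
  assume "xm1 m dvd w"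
  then have "\<And>r. bf m w r = bf m 0 r" by (intro bf_cong) simp_all
  then show "\<forall>r. degree r < m \<longrightarrow> bf m w r = 0" by (simp add: bf_zero_left)
next
  assume H: "\<forall>r. degree r < m \<longrightarrow> bf m w r = 0"
  define w' where "w' = w mod xm1 m"
  have dw: "degree w' < m" using reduced_mod[OF assms, of w] assms unfolding w'_def by auto
  have c: "xm1 m dvd w - w'" unfolding w'_def by (metis mod_eq_dvd_iff mod_mod_trivial)
  have "coeff w' j = 0" for j
  proof (cases "j < m")
    case True
    have "coeff w' j = bf m w' (monom 1 j)" using bf_monom1[OF assms dw True] by simp
    also have "\<dots> = bf m w (monom 1 j)" by (rule bf_cong) (use c in \<open>simp_all add: dvd_diff_commute\<close>)
    also have "\<dots> = 0" using H True assms by (auto simp: degree_monom_eq)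
    finally show ?thesis .
  next
    case False then show ?thesis using dw by (simp add: coeff_eq_0)
  qed
  then have "w' = 0" by (simp add: poly_eqI)
  then show "xm1 m dvd w" unfolding w'_def by auto
qed



lemma reflect_sum: "reflect_poly p = (\<Sum>n\<le>degree p. monom (coeff p n) (degree p - n))"
proof (rule poly_eqI)
  fix k
  show "coeff (reflect_poly p) k = coeff (\<Sum>n\<le>degree p. monom (coeff p n) (degree p - n)) k"
  proof (cases "k \<le> degree p")
    case True
    have "coeff (\<Sum>n\<le>degree p. monom (coeff p n) (degree p - n)) k
        = (\<Sum>n\<le>degree p. if n = degree p - k then coeff p n else 0)"
      unfolding coeff_sum coeff_monom by (rule sum.cong) (use True in auto)
    also have "\<dots> = coeff p (degree p - k)" by simp
    finally show ?thesis using True by (simp add: coeff_reflect_poly)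
  next
    case False
    have "coeff (\<Sum>n\<le>degree p. monom (coeff p n) (degree p - n)) k = 0"
      unfolding coeff_sum coeff_monom by (rule sum.neutral) (use False in auto)
    then show ?thesis using False by (simp add: coeff_reflect_poly)
  qed
qed

lemma cj_reflect: assumes "m \<ge> 1"
  shows "xm1 m dvd monom 1 (degree p) * cj m p - reflect_poly (p::'a::field poly)"
proof -
  let ?d = "degree p"
  have "monom 1 ?d * cj m p = monom 1 ?d * cj m (\<Sum>n\<le>?d. monom (coeff p n) n)"
    by (simp only: poly_as_sum_of_monoms)
  also have "\<dots> = (\<Sum>n\<le>?d. monom (coeff p n) (?d + n * (m - 1)))"
    by (simp add: cj_sum cj_monom sum_distrib_left mult_monom)
  finally have "monom 1 ?d * cj m p - reflect_poly p =
     (\<Sum>n\<le>?d. monom (coeff p n) (?d + n * (m - 1)) - monom (coeff p n) (?d - n))"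
    by (simp add: reflect_sum sum_subtractf)
  also have "xm1 m dvd \<dots>"
  proof (rule dvd_sum)
    fix n assume "n \<in> {..?d}"
    then have "?d + n * (m - 1) = (?d - n) + n * m" using assms
      by (simp add: algebra_simps diff_mult_distrib2)
    then have "(?d + n * (m - 1)) mod m = (?d - n) mod m" by (simp only: mod_mult_self1)
    then have "monom (coeff p n) (?d + n * (m - 1)) mod xm1 m = monom (coeff p n) (?d - n) mod xm1 m"
      by (simp add: red_monom[OF assms])
    then show "xm1 m dvd monom (coeff p n) (?d + n * (m - 1)) - monom (coeff p n) (?d - n)"
      using mod_eq_dvd_iff by blast
  qed
  finally show ?thesis .
qed

lemma unit_cancel: assumes "m \<ge> 1" "xm1 m dvd monom 1 d * y"
  shows "xm1 m dvd (y::'a::field poly)"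
proof -
  have h1: "xm1 m dvd monom 1 (d * (m - 1)) * (monom 1 d * y)" using assms(2) by (rule dvd_mult)
  have "d * (m - 1) + d = m * d" using assms(1) by (simp add: algebra_simps diff_mult_distrib2)
  then have e: "monom 1 (d * (m - 1)) * (monom 1 d * y) = monom 1 (m * d) * y"
    by (simp only: mult.assoc[symmetric] mult_monom mult_1)
  have a: "xm1 m dvd monom 1 (m * d) * y" using h1 unfolding e .
  have b: "xm1 m dvd (monom 1 (m * d) - 1) * y" using xm1_dvd_monom by (rule dvd_mult2)
  have "y = monom 1 (m * d) * y - (monom 1 (m * d) - 1) * y" by (simp add: algebra_simps)
  then show ?thesis using a b by (metis dvd_diff)
qed

lemma reflect_xm1: assumes "m \<ge> 1" shows "reflect_poly (xm1 m) = - (xm1 m :: 'a::field poly)"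
proof (rule poly_eqI)
  fix n
  show "coeff (reflect_poly (xm1 m)) n = coeff (- (xm1 m :: 'a poly)) n"
    using assms unfolding coeff_reflect_poly degree_xm1[OF assms]
    by (auto simp: xm1_def coeff_monom coeff_1)
qed



lemma dvd_diff_iff: "(x::'a::comm_ring_1) dvd a - b \<Longrightarrow> x dvd a \<longleftrightarrow> x dvd b"
proof -
  assume h: "x dvd a - b"
  have "b = a - (a - b)" "a = (a - b) + b" by simp_all
  then show ?thesis using h by (metis dvd_diff dvd_add)
qed

lemma normalize_monic: "lead_coeff (g::'a::field_gcd poly) = 1 \<Longrightarrow> normalize g = g"
  by (simp add: normalize_poly_def pCons_one)

lemma perp_facts:
  fixes g :: "'a::field_gcd poly"
  assumes m: "m \<ge> 1" and g: "lead_coeff g = 1" "g dvd xm1 m"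
  defines "h \<equiv> xm1 m div g"
  shows "xm1 m = g * h" "coeff h 0 \<noteq> 0" "coeff g 0 \<noteq> 0"
    "rperp m g = smult (inverse (coeff h 0)) (reflect_poly h) mod xm1 m"
    "reflect_poly g * reflect_poly h = - xm1 m" "g \<noteq> 0" "h \<noteq> 0"
proof -
  show e: "xm1 m = g * h" unfolding h_def using g(2) by simp
  have "poly (xm1 m) 0 = (-1::'a)" using m by (simp add: xm1_def poly_monom)
  then have "poly g 0 * poly h 0 = -1" unfolding e by simp
  then show "coeff h 0 \<noteq> 0" "coeff g 0 \<noteq> 0" by (auto simp: poly_0_coeff_0)
  have "gcd g (xm1 m) = g" using g by (simp add: gcd_proj1_if_dvd normalize_monic)
  then show "rperp m g = smult (inverse (coeff h 0)) (reflect_poly h) mod xm1 m"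
    unfolding rperp_def h_def by (simp add: Let_def poly_0_coeff_0)
  show "reflect_poly g * reflect_poly h = - xm1 m"
    using reflect_xm1[OF m] e by (metis reflect_poly_mult)
  show "g \<noteq> 0" "h \<noteq> 0" using e xm1_nz[OF m] by auto
qed



lemma lemB:
  fixes g u :: "'a::field_gcd poly"
  assumes m: "m \<ge> 1" and g: "lead_coeff g = 1" "g dvd xm1 m" and u: "degree u < m"
  shows "xm1 m dvd u * cj m g \<longleftrightarrow> rperp m g dvd u"
proof -
  define h where "h = xm1 m div g"
  note F = perp_facts[OF m g, folded h_def]
  define c where "c = inverse (coeff h 0)"
  have c0: "c \<noteq> 0" using F(2) unfolding c_def by simp
  have "xm1 m dvd u * cj m g \<longleftrightarrow> xm1 m dvd monom 1 (degree g) * (u * cj m g)"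
    using unit_cancel[OF m] by (metis dvd_mult)
  also have "\<dots> \<longleftrightarrow> xm1 m dvd u * reflect_poly g"
  proof (rule dvd_diff_iff)
    have "monom 1 (degree g) * (u * cj m g) - u * reflect_poly g
        = u * (monom 1 (degree g) * cj m g - reflect_poly g)" by (simp add: algebra_simps)
    then show "xm1 m dvd monom 1 (degree g) * (u * cj m g) - u * reflect_poly g"
      using cj_reflect[OF m, of g] by (metis dvd_mult)
  qed
  also have "\<dots> \<longleftrightarrow> reflect_poly g * reflect_poly h dvd reflect_poly g * u"
    using F(5) by (metis minus_dvd_iff mult.commute)
  also have "\<dots> \<longleftrightarrow> reflect_poly h dvd u"
    using F(6) by (simp add: dvd_times_left_cancel_iff reflect_poly_eq_0_iff)
  also have "\<dots> \<longleftrightarrow> rperp m g dvd u"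
  proof (cases "degree h < m")
    case True
    have "degree (smult c (reflect_poly h)) < m"
      using True c0 degree_reflect_poly_eq[OF F(2)] by simp
    then have "rperp m g = smult c (reflect_poly h)"
      unfolding F(4) c_def[symmetric] using degree_xm1[OF m] by (metis mod_poly_less)
    then show ?thesis using c0 by (simp add: smult_dvd_iff)
  next
    case False
    have "degree h \<le> m" using dvd_imp_degree_le[of h "xm1 m"] F(1) xm1_nz[OF m] degree_xm1[OF m]
      by (metis dvd_triv_right)
    then have dh: "degree h = m" using False by simp
    have "degree g + degree h = m" using F(1,6,7) degree_xm1[OF m] by (metis degree_mult_eq)
    then have "degree g = 0" using dh by simp
    then have "degree (reflect_poly g) = 0" using degree_reflect_poly_eq[OF F(3)] by simp
    moreover have "reflect_poly g \<noteq> 0" using F(6) by (simp add: reflect_poly_eq_0_iff)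
    ultimately have ug: "is_unit (reflect_poly g)" by (simp add: is_unit_iff_degree)
    have "xm1 m dvd reflect_poly g * reflect_poly h" using F(5) by (metis dvd_minus_iff dvd_refl)
    then have "xm1 m dvd reflect_poly h" using ug by (metis dvd_mult_unit_iff')
    then have "rperp m g = 0" unfolding F(4) by (simp add: dvd_smult)
    moreover have "reflect_poly h dvd u \<longleftrightarrow> u = 0"
    proof
      assume d: "reflect_poly h dvd u"
      show "u = 0"
      proof (rule ccontr)
        assume "u \<noteq> 0"
        then have "degree (reflect_poly h) \<le> degree u" using d by (rule dvd_imp_degree_le[rotated])
        then show False using u dh degree_reflect_poly_eq[OF F(2)] by simp
      qed
    qed simp
    ultimately show ?thesis by simp
  qed
  finally show ?thesis .
qed



definition cg :: "nat \<Rightarrow> 'a::field poly \<Rightarrow> 'a poly \<Rightarrow> bool" where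
  "cg m a b \<longleftrightarrow> xm1 m dvd a - b"

lemma cg_refl[simp]: "cg m a a" by (simp add: cg_def)
lemma cg_sym: "cg m a b \<Longrightarrow> cg m b a" unfolding cg_def by (simp add: dvd_diff_commute)
lemma cg_trans: "cg m a b \<Longrightarrow> cg m b c \<Longrightarrow> cg m a c"
proof -
  assume "cg m a b" "cg m b c"
  moreover have "a - c = (a - b) + (b - c)" by simp
  ultimately show ?thesis unfolding cg_def by (metis dvd_add)
qed
lemma cg_add: "cg m a b \<Longrightarrow> cg m c d \<Longrightarrow> cg m (a + c) (b + d)"
  unfolding cg_def by (metis add_diff_add dvd_add)
lemma cg_diff: "cg m a b \<Longrightarrow> cg m c d \<Longrightarrow> cg m (a - c) (b - d)"
proof -
  assume "cg m a b" "cg m c d"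
  moreover have "(a - c) - (b - d) = (a - b) - (c - d)" by simp
  ultimately show ?thesis unfolding cg_def by (metis dvd_diff)
qed
lemma cg_minus: "cg m a b \<Longrightarrow> cg m (- a) (- b)"
  unfolding cg_def by (metis minus_diff_minus dvd_minus_iff)
lemma cg_mult: "cg m a b \<Longrightarrow> cg m c d \<Longrightarrow> cg m (a * c) (b * d)"
proof -
  assume "cg m a b" "cg m c d"
  then have "xm1 m dvd (a - b) * c + b * (c - d)" unfolding cg_def by (simp add: dvd_add dvd_mult2 dvd_mult)
  moreover have "(a - b) * c + b * (c - d) = a * c - b * d" by (simp add: algebra_simps)
  ultimately show ?thesis unfolding cg_def by simp
qed
lemma cg_mod: "cg m (p mod xm1 m) p" unfolding cg_def by (metis mod_eq_dvd_iff mod_mod_trivial)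
lemma cg_mod_iff: "cg m a b \<longleftrightarrow> a mod xm1 m = b mod xm1 m" unfolding cg_def by (simp add: mod_eq_dvd_iff)
lemma cg_zero: "cg m a 0 \<longleftrightarrow> xm1 m dvd a" unfolding cg_def by simp
lemma cg_dvd: "g dvd xm1 m \<Longrightarrow> cg m a b \<Longrightarrow> g dvd a \<longleftrightarrow> g dvd b"
  unfolding cg_def by (meson dvd_diff_iff dvd_trans)
lemma cg_cj: "cg m a b \<Longrightarrow> cg m (cj m a) (cj m b)" unfolding cg_def by (rule cj_cong)
lemma cg_xdvd: "cg m a b \<Longrightarrow> xm1 m dvd a \<longleftrightarrow> xm1 m dvd b" using cg_dvd[OF dvd_refl] by blast
lemma cg_bf: "cg m a a' \<Longrightarrow> cg m b b' \<Longrightarrow> bf m a b = bf m a' b'" unfolding cg_def by (rule bf_cong)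

lemma deg_mod: assumes "m \<ge> 1" shows "degree (p mod xm1 m) < m"
  using reduced_mod[OF assms, of p] assms by (metis degree_0 less_le_trans zero_less_one)

lemma pcompose_cg: "cg m q1 q2 \<Longrightarrow> cg m (p \<circ>\<^sub>p q1) (p \<circ>\<^sub>p q2)"
proof (induction p rule: pCons_induct)
  case 0 then show ?case by simp
next
  case (pCons a p)
  then have "cg m ([:a:] + q1 * (p \<circ>\<^sub>p q1)) ([:a:] + q2 * (p \<circ>\<^sub>p q2))"
    by (intro cg_add cg_mult) auto
  then show ?case by (simp add: pcompose_pCons)
qed

lemma cj_cj: assumes "m \<ge> 1" shows "cg m (cj m (cj m p)) p"
proof -
  have q: "monom 1 (m - 1) \<circ>\<^sub>p monom 1 (m - 1) = (monom 1 ((m - 1) * (m - 1)) :: 'a poly)"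
    using cj_monom[of m 1 "m - 1"] unfolding cj_def .
  have e: "cj m (cj m p) = p \<circ>\<^sub>p monom 1 ((m - 1) * (m - 1))"
    unfolding cj_def pcompose_assoc[symmetric] q ..
  have a: "((m - 1) * (m - 1)) mod m = 1 mod m"
  proof (cases "m = 1")
    case False
    then have "(m - 1) * (m - 1) = 1 + (m - 2) * m" using assms
      by (cases m) (auto simp: algebra_simps)
    then show ?thesis by (simp only: mod_mult_self1)
  qed simp
  have "cg m (monom 1 ((m - 1) * (m - 1))) (monom 1 1)"
    unfolding cg_mod_iff red_monom[OF assms] a ..
  then have "cg m (cj m (cj m p)) (p \<circ>\<^sub>p monom 1 1)" unfolding e by (rule pcompose_cg)
  moreover have "p \<circ>\<^sub>p monom 1 1 = p" unfolding One_nat_def monom_Suc monom_0 pcompose_idR ..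
  ultimately show ?thesis by simp
qed

lemma rconj_sum: assumes "m \<ge> 1"
  shows "rconj m v = (\<Sum>n<m. monom (coeff v n) ((m - n) mod m))"
proof (rule poly_eqI)
  fix i
  have l: "coeff (rconj m v) i = (if i < m then coeff v ((m - i) mod m) else 0)"
    unfolding rconj_def coeff_Poly_eq by (simp add: nth_default_def)
  show "coeff (rconj m v) i = coeff (\<Sum>n<m. monom (coeff v n) ((m - n) mod m)) i"
  proof (cases "i < m")
    case True
    have "coeff (\<Sum>n<m. monom (coeff v n) ((m - n) mod m)) i
        = (\<Sum>n<m. if n = (m - i) mod m then coeff v n else 0)"
      unfolding coeff_sum coeff_monom
    proof (rule sum.cong)
      fix n assume "n \<in> {..<m}"
      then have "((m - n) mod m = i) \<longleftrightarrow> n = (m - i) mod m" using True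
        by (cases "n = 0"; cases "i = 0") (auto simp: mod_if)
      then show "(if (m - n) mod m = i then coeff v n else 0) = (if n = (m - i) mod m then coeff v n else 0)"
        by simp
    qed simp
    also have "\<dots> = coeff v ((m - i) mod m)" using assms by simp
    finally show ?thesis using l True by simp
  next
    case False
    have "coeff (\<Sum>n<m. monom (coeff v n) ((m - n) mod m)) i = 0"
      unfolding coeff_sum coeff_monom by (rule sum.neutral) (use False assms in auto)
    then show ?thesis using l False by simp
  qed
qed

lemma rconj_cj: assumes "m \<ge> 1" "degree v < m" shows "cg m (rconj m v) (cj m v)"
proof -
  have "cj m v = cj m (\<Sum>n<m. monom (coeff v n) n)" using poly_sum_lt[OF assms] by simp
  also have "\<dots> = (\<Sum>n<m. monom (coeff v n) (n * (m - 1)))" unfolding cj_sum cj_monom ..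
  finally have "rconj m v - cj m v = (\<Sum>n<m. monom (coeff v n) ((m - n) mod m) - monom (coeff v n) (n * (m - 1)))"
    unfolding rconj_sum[OF assms(1)] sum_subtractf by simp
  also have "xm1 m dvd \<dots>"
  proof (rule dvd_sum)
    fix n assume n: "n \<in> {..<m}"
    have "(m - n) mod m = (n * (m - 1)) mod m"
    proof (cases "n = 0")
      case False
      then obtain k where k: "n = Suc k" by (cases n) auto
      have "n < m" using n by simp
      then have "n * (m - 1) = (m - n) + (n - 1) * m" unfolding k
        by (simp add: algebra_simps diff_mult_distrib2)
      then show ?thesis by (simp only: mod_mult_self1)
    qed simp
    then have "monom (coeff v n) ((m - n) mod m) mod xm1 m = monom (coeff v n) (n * (m - 1)) mod xm1 m"
      unfolding red_monom[OF assms(1)] by simp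
    then show "xm1 m dvd monom (coeff v n) ((m - n) mod m) - monom (coeff v n) (n * (m - 1))"
      using mod_eq_dvd_iff by blast
  qed
  finally show ?thesis unfolding cg_def .
qed



lemma cg_smult: "cg m a b \<Longrightarrow> cg m (smult c a) (smult c b)"
  unfolding cg_def by (metis smult_diff_right dvd_smult)

lemma cj_smult: "cj m (smult c p) = smult c (cj m p)" by (simp add: cj_def pcompose_smult)

lemma bf_mult: "bf m a (r * g) = bf m (a * cj m g) (r::'a::field poly)"
  unfolding bf_def cj_mult by (simp add: ac_simps)

lemma bf_add_right: "bf m a (b + b') = bf m a b + bf m a (b'::'a::field poly)"
  unfolding bf_def cj_add by (simp add: distrib_left poly_mod_add_left)

lemma bf_zero_right: "bf m a 0 = (0::'a::field)"
  unfolding bf_def cj_0 by simp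

lemma perp_dual:
  fixes g w :: "'a::field_gcd poly"
  assumes m: "m \<ge> 1" and g: "lead_coeff g = 1" "g dvd xm1 m"
    and d: "xm1 m dvd cj m (rperp m g) * w"
  shows "g dvd w"
proof -
  define h where "h = xm1 m div g"
  note F = perp_facts[OF m g, folded h_def]
  define c where "c = inverse (coeff h 0)"
  have c0: "c \<noteq> 0" using F(2) unfolding c_def by simp
  have "cg m (rperp m g) (smult c (reflect_poly h))" unfolding F(4) c_def by (rule cg_mod)
  then have "cg m (cj m (rperp m g) * w) (smult c (cj m (reflect_poly h)) * w)"
    by (intro cg_mult) (simp_all add: cg_cj flip: cj_smult)
  then have "xm1 m dvd smult c (cj m (reflect_poly h)) * w" using d cg_xdvd by blast
  then have "xm1 m dvd monom 1 (degree (reflect_poly h)) * (smult c (cj m (reflect_poly h)) * w)"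
    by (rule dvd_mult)
  moreover have "cg m (monom 1 (degree (reflect_poly h)) * (smult c (cj m (reflect_poly h)) * w))
       (smult c (h * w))"
  proof -
    have "cg m (monom 1 (degree (reflect_poly h)) * cj m (reflect_poly h)) h"
      using cj_reflect[OF m, of "reflect_poly h"] reflect_poly_reflect_poly[OF F(2)] unfolding cg_def by simp
    then have "cg m (smult c (monom 1 (degree (reflect_poly h)) * cj m (reflect_poly h) * w)) (smult c (h * w))"
      by (intro cg_smult cg_mult) simp_all
    then show ?thesis by (simp add: ac_simps)
  qed
  ultimately have "xm1 m dvd smult c (h * w)" using cg_xdvd by blast
  then have "g * h dvd w * h" using c0 F(1) by (simp add: dvd_smult_iff ac_simps)
  then show ?thesis using F(7) by simp
qed

lemma cvec_inj: "degree a < m \<Longrightarrow> degree b < m \<Longrightarrow> cvec m a = cvec m b \<Longrightarrow> a = b"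
proof (rule poly_eqI)
  fix i assume "degree a < m" "degree b < m" "cvec m a = cvec m b"
  then show "coeff a i = coeff b i"
    unfolding cvec_def by (cases "i < m") (auto simp: coeff_eq_0 dest: map_eq_conv[THEN iffD1])
qed

lemma length_cvec[simp]: "length (cvec m a) = m" by (simp add: cvec_def)

lemma cvec_Poly: assumes "length l = m" "m \<ge> 1"
  shows "cvec m (Poly l) = l" "degree (Poly l) < m"
proof -
  show "cvec m (Poly l) = l" unfolding cvec_def coeff_Poly_eq using assms
    by (intro nth_equalityI) (auto simp: nth_default_def)
  have "degree (Poly l) \<le> m - 1"
    by (rule degree_le) (use assms in \<open>auto simp: coeff_Poly_eq nth_default_def\<close>)
  then show "degree (Poly l) < m" using assms by simp
qed

lemma einner_append: "length a = length c \<Longrightarrow> einner (a @ b) (c @ d) = einner a c + einner b d"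
  unfolding einner_def by simp



lemma cg_red_eq: assumes "m \<ge> 1" "degree a < m" "degree b < m" "cg m a b" shows "a = b"
proof -
  have "a mod xm1 m = a" "b mod xm1 m = b" using assms degree_xm1[OF assms(1)] by (metis mod_poly_less)+
  then show ?thesis using assms(4) cg_mod_iff by metis
qed

lemma rmult_zero[simp]: "rmult m a 0 = 0" by (simp add: rmult_def)

lemma cg_rmult: "cg m (rmult m a b) (a * b)" unfolding rmult_def by (rule cg_mod)

lemma deg_rmult: "m \<ge> 1 \<Longrightarrow> degree (rmult m a b) < m" unfolding rmult_def by (rule deg_mod)

lemma deg_add_lt: "degree a < m \<Longrightarrow> degree b < m \<Longrightarrow> degree (a + b) < (m::nat)"
  using degree_add_le_max[of a b] by (metis max_less_iff_conj le_less_trans)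

lemma mem_D:
  fixes g1 g2 v1 x y :: "'a::field poly"
  assumes m: "m \<ge> 1" and g: "g1 dvd xm1 m" "g2 dvd xm1 m" and x: "degree x < m" and y: "degree y < m"
  shows "cvec m x @ cvec m y \<in> qc_code m g1 (rmult m v1 g1) 0 g2 \<longleftrightarrow> g1 dvd x \<and> g2 dvd (y - v1 * x)"
proof
  assume "cvec m x @ cvec m y \<in> qc_code m g1 (rmult m v1 g1) 0 g2"
  then obtain r1 r2 where r: "cvec m x @ cvec m y = cvec m (rmult m r1 g1 + rmult m r2 0) @ cvec m (rmult m r1 (rmult m v1 g1) + rmult m r2 g2)"
    unfolding qc_code_def by blast
  then have "cvec m x = cvec m (rmult m r1 g1 + rmult m r2 0)" "cvec m y = cvec m (rmult m r1 (rmult m v1 g1) + rmult m r2 g2)"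
    by (simp_all add: append_eq_append_conv)
  then have ex: "x = rmult m r1 g1 + rmult m r2 0" and ey: "y = rmult m r1 (rmult m v1 g1) + rmult m r2 g2"
    using x y deg_rmult[OF m] deg_add_lt by (metis cvec_inj)+
  have ex': "x = rmult m r1 g1" using ex by (simp add: rmult_def)
  show "g1 dvd x \<and> g2 dvd (y - v1 * x)"
  proof
    show "g1 dvd x" unfolding ex' rmult_def using g(1) by (simp add: dvd_mod_iff)
    have "cg m (y - v1 * x) ((r1 * (v1 * g1) + r2 * g2) - v1 * (r1 * g1))"
      unfolding ey ex' by (intro cg_diff cg_add cg_mult cg_rmult cg_refl cg_trans[OF cg_rmult]; simp)
    moreover have "(r1 * (v1 * g1) + r2 * g2) - v1 * (r1 * g1) = r2 * g2" by (simp add: algebra_simps)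
    ultimately show "g2 dvd (y - v1 * x)" using cg_dvd[OF g(2)] by auto
  qed
next
  assume "g1 dvd x \<and> g2 dvd (y - v1 * x)"
  then obtain q p where q: "x = g1 * q" and p: "y - v1 * x = g2 * p" by (auto elim!: dvdE)
  define r1 where "r1 = q mod xm1 m"
  define r2 where "r2 = p mod xm1 m"
  have "x = rmult m r1 g1 + rmult m r2 0"
  proof (rule cg_red_eq[OF m x])
    show "degree (rmult m r1 g1 + rmult m r2 0) < m" using deg_rmult[OF m] deg_add_lt by blast
    have "cg m (rmult m r1 g1) (q * g1)"
      unfolding r1_def by (intro cg_trans[OF cg_rmult] cg_mult cg_mod cg_refl)
    then show "cg m x (rmult m r1 g1 + rmult m r2 0)" using q by (simp add: cg_sym mult.commute)
  qed
  moreover have "y = rmult m r1 (rmult m v1 g1) + rmult m r2 g2"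
  proof (rule cg_red_eq[OF m y])
    show "degree (rmult m r1 (rmult m v1 g1) + rmult m r2 g2) < m" using deg_rmult[OF m] deg_add_lt by blast
    have "cg m (rmult m r1 (rmult m v1 g1) + rmult m r2 g2) (q * (v1 * g1) + p * g2)"
      unfolding r1_def r2_def by (intro cg_add cg_trans[OF cg_rmult] cg_mult cg_mod cg_rmult; simp)
    moreover have "q * (v1 * g1) + p * g2 = y" using p q by (simp add: algebra_simps)
    ultimately show "cg m y (rmult m r1 (rmult m v1 g1) + rmult m r2 g2)" by (simp add: cg_sym)
  qed
  moreover have "r1 \<in> Rset m" "r2 \<in> Rset m" unfolding Rset_def r1_def r2_def using deg_mod[OF m] by auto
  ultimately show "cvec m x @ cvec m y \<in> qc_code m g1 (rmult m v1 g1) 0 g2"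
    unfolding qc_code_def by blast
qed

lemma length_cvec_eq: "length (cvec m a) = length (cvec m b)" by simp

lemma mem_dual:
  fixes g1 g2 v1 u1 u2 :: "'a::field poly"
  assumes m: "m \<ge> 1" and u1: "degree u1 < m" and u2: "degree u2 < m"
  shows "cvec m u1 @ cvec m u2 \<in> edual (2 * m) (qc_code m g1 (rmult m v1 g1) 0 g2) \<longleftrightarrow>
     xm1 m dvd u2 * cj m g2 \<and> xm1 m dvd (u1 + u2 * cj m v1) * cj m g1"
proof -
  define W1 where "W1 = (u1 + u2 * cj m v1) * cj m g1"
  define W2 where "W2 = u2 * cj m g2"
  have key: "einner (cvec m u1 @ cvec m u2) (cvec m (rmult m r1 g1 + rmult m r2 0) @ cvec m (rmult m r1 (rmult m v1 g1) + rmult m r2 g2))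
      = bf m W1 r1 + bf m W2 r2" for r1 r2
  proof -
    have "einner (cvec m u1 @ cvec m u2) (cvec m (rmult m r1 g1 + rmult m r2 0) @ cvec m (rmult m r1 (rmult m v1 g1) + rmult m r2 g2))
       = bf m u1 (rmult m r1 g1 + rmult m r2 0) + bf m u2 (rmult m r1 (rmult m v1 g1) + rmult m r2 g2)"
      unfolding einner_append[OF length_cvec_eq] 
      by (intro arg_cong2[where f="(+)"] inner_bf[OF m] u1 u2 deg_add_lt deg_rmult[OF m])
    also have "bf m u1 (rmult m r1 g1 + rmult m r2 0) = bf m u1 (r1 * g1)"
      by (rule cg_bf) (simp_all add: rmult_def cg_mod)
    also have "bf m u2 (rmult m r1 (rmult m v1 g1) + rmult m r2 g2) = bf m u2 (r1 * (v1 * g1) + r2 * g2)"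
      by (rule cg_bf[OF cg_refl], intro cg_add cg_trans[OF cg_rmult] cg_mult cg_rmult; simp)
    also have "bf m u1 (r1 * g1) + bf m u2 (r1 * (v1 * g1) + r2 * g2) = bf m W1 r1 + bf m W2 r2"
    proof -
      have "bf m u2 (r1 * (v1 * g1)) = bf m (u2 * cj m v1 * cj m g1) r1"
        unfolding mult.assoc[symmetric] bf_mult by (simp add: cj_mult ac_simps)
      then have "bf m u1 (r1 * g1) + bf m u2 (r1 * (v1 * g1)) = bf m W1 r1"
        unfolding W1_def bf_mult distrib_right bf_add_left by simp
      moreover have "bf m u2 (r2 * g2) = bf m W2 r2" unfolding W2_def bf_mult ..
      ultimately show ?thesis unfolding bf_add_right by simp
    qed
    finally show ?thesis .
  qed
  have "cvec m u1 @ cvec m u2 \<in> edual (2 * m) (qc_code m g1 (rmult m v1 g1) 0 g2) \<longleftrightarrow>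
      (\<forall>r1 r2. degree r1 < m \<longrightarrow> degree r2 < m \<longrightarrow> bf m W1 r1 + bf m W2 r2 = 0)"
  proof -
    have "cvec m u1 @ cvec m u2 \<in> edual (2 * m) (qc_code m g1 (rmult m v1 g1) 0 g2) \<longleftrightarrow>
      (\<forall>r1 r2. r1 \<in> Rset m \<longrightarrow> r2 \<in> Rset m \<longrightarrow> einner (cvec m u1 @ cvec m u2) (cvec m (rmult m r1 g1 + rmult m r2 0) @ cvec m (rmult m r1 (rmult m v1 g1) + rmult m r2 g2)) = 0)"
      unfolding edual_def qc_code_def by (simp only: length_append length_cvec mult_2 simp_thms mem_Collect_eq) blast
    then show ?thesis unfolding key Rset_def mem_Collect_eq .
  qed
  also have "\<dots> \<longleftrightarrow> (\<forall>r. degree r < m \<longrightarrow> bf m W1 r = 0) \<and> (\<forall>r. degree r < m \<longrightarrow> bf m W2 r = 0)"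
  proof safe
    fix r :: "'a poly"
    assume H: "\<forall>r1 r2. degree r1 < m \<longrightarrow> degree r2 < m \<longrightarrow> bf m W1 r1 + bf m W2 r2 = 0" "degree r < m"
    show "bf m W1 r = 0" using H(1)[rule_format, of r 0] H(2) m by (simp add: bf_zero_right)
    show "bf m W2 r = 0" using H(1)[rule_format, of 0 r] H(2) m by (simp add: bf_zero_right)
  qed auto
  also have "\<dots> \<longleftrightarrow> xm1 m dvd W2 \<and> xm1 m dvd W1" using bf_annih[OF m] by blast
  finally show ?thesis unfolding W1_def W2_def .
qed



lemma deg_rperp: "m \<ge> 1 \<Longrightarrow> degree (rperp m g) < m"
  unfolding rperp_def Let_def by (rule deg_mod)

theorem mainTheorem7:
  fixes g1 g2 v1 :: "'a::{field_gcd, finite} poly" and m :: nat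
  assumes "m \<ge> 1"
    and "lead_coeff g1 = 1" and "g1 dvd xm1 m"
    and "lead_coeff g2 = 1" and "g2 dvd xm1 m"
    and "v1 \<in> Rset m"
  shows "dual_containing (2 * m) (qc_code m g1 (rmult m v1 g1) 0 g2) \<longleftrightarrow>
           (g1 dvd rperp m g1
            \<and> g1 dvd rmult m (rperp m g2) (rconj m v1)
            \<and> g2 dvd rmult m (rperp m g2) (1 + rmult m (rconj m v1) v1))"
proof -
  note m = assms(1) and G1 = assms(2,3) and G2 = assms(4,5)
  have v1: "degree v1 < m" using assms(6) by (simp add: Rset_def)
  define D where "D = qc_code m g1 (rmult m v1 g1) 0 g2"
  define P1 where "P1 = rperp m g1"
  define P2 where "P2 = rperp m g2"
  define V where "V = rconj m v1"
  have dP1: "degree P1 < m" and dP2: "degree P2 < m" unfolding P1_def P2_def using deg_rperp[OF m] by auto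
  have cV: "cg m V (cj m v1)" unfolding V_def by (rule rconj_cj[OF m v1])
  define Cond where "Cond u1 u2 \<longleftrightarrow> xm1 m dvd u2 * cj m g2 \<and> xm1 m dvd (u1 + u2 * cj m v1) * cj m g1" for u1 u2
  define Mem where "Mem u1 u2 \<longleftrightarrow> g1 dvd u1 \<and> g2 dvd (u2 - v1 * u1)" for u1 u2
  have S1: "dual_containing (2 * m) D \<longleftrightarrow>
      (\<forall>u1 u2. degree u1 < m \<longrightarrow> degree u2 < m \<longrightarrow> Cond u1 u2 \<longrightarrow> Mem u1 u2)"
  proof
    assume sub: "dual_containing (2 * m) D"
    show "\<forall>u1 u2. degree u1 < m \<longrightarrow> degree u2 < m \<longrightarrow> Cond u1 u2 \<longrightarrow> Mem u1 u2"
    proof (intro allI impI)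
      fix u1 u2 :: "'a poly" assume d: "degree u1 < m" "degree u2 < m" and c: "Cond u1 u2"
      then have "cvec m u1 @ cvec m u2 \<in> edual (2 * m) D"
        unfolding D_def Cond_def using mem_dual[OF m d] by blast
      then have "cvec m u1 @ cvec m u2 \<in> D" using sub unfolding dual_containing_def by blast
      then show "Mem u1 u2" unfolding D_def Mem_def using mem_D[OF m G1(2) G2(2) d] by blast
    qed
  next
    assume H: "\<forall>u1 u2. degree u1 < m \<longrightarrow> degree u2 < m \<longrightarrow> Cond u1 u2 \<longrightarrow> Mem u1 u2"
    show "dual_containing (2 * m) D" unfolding dual_containing_def
    proof
      fix u assume u: "u \<in> edual (2 * m) D"
      then have lu: "length u = 2 * m" by (simp add: edual_def)
      define u1 where "u1 = Poly (take m u)"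
      define u2 where "u2 = Poly (drop m u)"
      have l1: "length (take m u) = m" and l2: "length (drop m u) = m" using lu by simp_all
      have d: "degree u1 < m" "degree u2 < m" unfolding u1_def u2_def using cvec_Poly[OF l1 m] cvec_Poly[OF l2 m] by auto
      have ue: "u = cvec m u1 @ cvec m u2" unfolding u1_def u2_def cvec_Poly[OF l1 m] cvec_Poly[OF l2 m] by simp
      have "Cond u1 u2" using u unfolding ue D_def Cond_def using mem_dual[OF m d] by blast
      then have "Mem u1 u2" using H d by blast
      then show "u \<in> D" unfolding ue D_def Mem_def using mem_D[OF m G1(2) G2(2) d] by blast
    qed
  qed
  have S2: "(\<forall>u1 u2. degree u1 < m \<longrightarrow> degree u2 < m \<longrightarrow> Cond u1 u2 \<longrightarrow> Mem u1 u2) \<longleftrightarrow>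
      (g1 dvd P1 \<and> g1 dvd rmult m P2 V \<and> g2 dvd rmult m P2 (1 + rmult m V v1))"
  proof
    assume H: "\<forall>u1 u2. degree u1 < m \<longrightarrow> degree u2 < m \<longrightarrow> Cond u1 u2 \<longrightarrow> Mem u1 u2"
    have "Cond P1 0" unfolding Cond_def using lemB[OF m G1 dP1] unfolding P1_def by simp
    then have "Mem P1 0" using H dP1 m by auto
    then have C1: "g1 dvd P1" unfolding Mem_def by simp
    define u1 where "u1 = (- (P2 * V)) mod xm1 m"
    have du1: "degree u1 < m" unfolding u1_def by (rule deg_mod[OF m])
    have cu1: "cg m u1 (- (P2 * cj m v1))" unfolding u1_def
      by (rule cg_trans[OF cg_mod]) (intro cg_minus cg_mult cg_refl cV)
    have "Cond u1 P2" unfolding Cond_def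
    proof
      show "xm1 m dvd P2 * cj m g2" using lemB[OF m G2 dP2] unfolding P2_def by simp
      have "cg m ((u1 + P2 * cj m v1) * cj m g1) ((- (P2 * cj m v1) + P2 * cj m v1) * cj m g1)"
        by (intro cg_mult cg_add cu1 cg_refl)
      then have "cg m ((u1 + P2 * cj m v1) * cj m g1) 0" by simp
      then show "xm1 m dvd (u1 + P2 * cj m v1) * cj m g1" unfolding cg_zero .
    qed
    then have "Mem u1 P2" using H du1 dP2 by blast
    then have M1: "g1 dvd u1" and M2: "g2 dvd P2 - v1 * u1" unfolding Mem_def by auto
    have "cg m u1 (- (P2 * V))" unfolding u1_def by (rule cg_mod)
    then have "g1 dvd - (P2 * V)" using M1 cg_dvd[OF G1(2)] by blast
    then have C2: "g1 dvd rmult m P2 V" unfolding rmult_def using G1(2) by (simp add: dvd_mod_iff)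
    have "cg m (P2 - v1 * u1) (P2 - v1 * (- (P2 * V)))" unfolding u1_def
      by (intro cg_diff cg_mult cg_refl cg_mod)
    moreover have "P2 - v1 * (- (P2 * V)) = P2 * (1 + V * v1)" by (simp add: algebra_simps)
    moreover have "cg m (rmult m P2 (1 + rmult m V v1)) (P2 * (1 + V * v1))"
      by (rule cg_trans[OF cg_rmult]) (intro cg_mult cg_add cg_refl cg_rmult)
    ultimately have "cg m (P2 - v1 * u1) (rmult m P2 (1 + rmult m V v1))"
      by (metis cg_sym cg_trans)
    then have C3: "g2 dvd rmult m P2 (1 + rmult m V v1)" using M2 cg_dvd[OF G2(2)] by blast
    show "g1 dvd P1 \<and> g1 dvd rmult m P2 V \<and> g2 dvd rmult m P2 (1 + rmult m V v1)"
      using C1 C2 C3 by blast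
  next
    assume "g1 dvd P1 \<and> g1 dvd rmult m P2 V \<and> g2 dvd rmult m P2 (1 + rmult m V v1)"
    then have C1: "g1 dvd P1" and C2: "g1 dvd rmult m P2 V" and C3: "g2 dvd rmult m P2 (1 + rmult m V v1)"
      by auto
    have XP1: "xm1 m dvd P1 * cj m g1" using lemB[OF m G1 dP1] unfolding P1_def by simp
    have D: "g2 dvd v1 * P1"
    proof -
      obtain k where k: "rmult m P2 V = g1 * k" using C2 by blast
      have "cg m (P2 * V) (g1 * k)" using k cg_rmult by (metis cg_sym)
      then have "cg m (cj m (P2 * V)) (cj m (g1 * k))" by (rule cg_cj)
      then have a: "cg m (cj m P2 * cj m V) (cj m g1 * cj m k)" unfolding cj_mult .
      have "cg m (cj m V) v1" using cg_trans[OF cg_cj[OF cV] cj_cj[OF m]] .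
      then have "cg m (cj m P2 * cj m V) (cj m P2 * v1)" by (intro cg_mult cg_refl)
      then have "cg m (cj m P2 * v1) (cj m g1 * cj m k)" using a by (metis cg_sym cg_trans)
      then have "cg m (cj m P2 * v1 * P1) (cj m g1 * cj m k * P1)" by (rule cg_mult[OF _ cg_refl])
      moreover have "xm1 m dvd cj m g1 * cj m k * P1" using XP1 by (metis dvd_mult mult.commute mult.assoc)
      ultimately have "xm1 m dvd cj m P2 * (v1 * P1)" using cg_xdvd by (metis mult.assoc)
      then show ?thesis using perp_dual[OF m G2] unfolding P2_def by blast
    qed
    show "\<forall>u1 u2. degree u1 < m \<longrightarrow> degree u2 < m \<longrightarrow> Cond u1 u2 \<longrightarrow> Mem u1 u2"
    proof (intro allI impI)
      fix u1 u2 :: "'a poly" assume d: "degree u1 < m" "degree u2 < m" and c: "Cond u1 u2"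
      have "P2 dvd u2" using c lemB[OF m G2 d(2)] unfolding Cond_def P2_def by blast
      then obtain b where b: "u2 = P2 * b" by blast
      have "xm1 m dvd ((u1 + u2 * cj m v1) mod xm1 m) * cj m g1"
        using c unfolding Cond_def by (metis cg_xdvd cg_mult cg_mod cg_refl)
      then have "P1 dvd (u1 + u2 * cj m v1) mod xm1 m" using lemB[OF m G1 deg_mod[OF m]] unfolding P1_def by blast
      then obtain a where a: "(u1 + u2 * cj m v1) mod xm1 m = P1 * a" by blast
      have "cg m (u1 + u2 * cj m v1) (P1 * a)" using a cg_mod by (metis cg_sym)
      then have "cg m ((u1 + u2 * cj m v1) - u2 * cj m v1) (P1 * a - P2 * b * V)"
        unfolding b by (intro cg_diff cg_mult cg_refl cg_sym[OF cV])
      then have x1: "cg m u1 (P1 * a - b * (P2 * V))" by (simp add: ac_simps)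
      have "cg m (P1 * a - b * (P2 * V)) (P1 * a - b * rmult m P2 V)"
        by (rule cg_diff[OF cg_refl cg_mult[OF cg_refl cg_sym[OF cg_rmult]]])
      then have cu1: "cg m u1 (P1 * a - b * rmult m P2 V)" using x1 cg_trans by blast
      have "g1 dvd P1 * a - b * rmult m P2 V" using C1 C2 by (simp add: dvd_diff dvd_mult dvd_mult2)
      then have M1: "g1 dvd u1" using cu1 cg_dvd[OF G1(2)] by blast
      have "cg m (u2 - v1 * u1) (P2 * b - v1 * (P1 * a - b * rmult m P2 V))"
        unfolding b by (intro cg_diff cg_mult cg_refl cu1)
      moreover have "cg m (P2 * b - v1 * (P1 * a - b * rmult m P2 V)) (b * (P2 * (1 + V * v1)) - a * (v1 * P1))"
        by (rule cg_trans[of _ _ "P2 * b - v1 * (P1 * a - b * (P2 * V))"])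
           (intro cg_diff cg_mult cg_refl cg_rmult, simp add: algebra_simps)
      moreover have "cg m (b * rmult m P2 (1 + rmult m V v1) - a * (v1 * P1)) (b * (P2 * (1 + V * v1)) - a * (v1 * P1))"
        by (intro cg_diff cg_mult cg_refl cg_add cg_trans[OF cg_rmult] cg_rmult)
      moreover have "g2 dvd b * rmult m P2 (1 + rmult m V v1) - a * (v1 * P1)"
        using C3 D by (simp add: dvd_diff dvd_mult dvd_mult2)
      ultimately have M2: "g2 dvd u2 - v1 * u1" using cg_dvd[OF G2(2)] by (metis cg_sym cg_trans)
      show "Mem u1 u2" unfolding Mem_def using M1 M2 by blast
    qed
  qed
  show ?thesis using S1 S2 unfolding D_def P1_def P2_def V_def by simp
qed

end
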